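(* Let $\Gamma$ be a free group with a finite or countably infinite free basis $S$. Let $T$ be the Cayley graph of $\Gamma$ with respect to $S\cup S^{-1}$, which is a tree. Let $\mu$ be a probability measure on $S\cup S^{-1}$ with $\mu(s)>0$ for all $s\in S\cup S^{-1}$, and let $P$ be the nearest neighbour random walk with $p(x,y)=\mu(x^{-1}y)$. Then $G(x,x\mid\lambda)\ne0$ for every $x\in T$ and every $\lambda\in\mathrm{res}(P)$. Consequently $\mathrm{res}^*(P)=\mathrm{res}(P)$.
   Context: Fix the root $o=e$, the identity element. Define $\mathsf m(x)=\prod_{i=1}^k p(x_{i-1},x_i)/p(x_i,x_{i-1})$ along the geodesic $[o=x_0,\dots,x_k=x]$. Then $P$, acting by $Pf(x)=\sum_y p(x,y)f(y)$, is a bounded self-adjoint operator on $\ell^2(T,\mathsf m)$. $\mathrm{res}(P)=\mathbb{C}\setminus\mathrm{spec}(P)$. For $\lambda\in\mathrm{res}(P)$, $G(x,y\mid\lambda)=((\lambda I-P)^{-1}\mathbf 1_y)(x)$; for $|\lambda|>\rho$ this equals $\sum_n p^{(n)}(x,y)\lambda^{-n-1}$, where $\rho$ is the spectral radius. $\mathrm{res}^*(P)=\{\lambda\in\mathrm{res}(P):G(x,x\mid\lambda)\ne0\text{ for all }x\}$. *)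

theory Defs
  imports "HOL-Analysis.Analysis"
begin

text \<open>Free group on a basis S (elements of type 'a). A letter is (s, True) for s
  and (s, False) for s^-1. Group elements are reduced words over letters from S.\<close>

type_synonym 'a letter = "'a \<times> bool"
type_synonym 'a word = "'a letter list"

definition flip :: "'a letter \<Rightarrow> 'a letter" where
  "flip t = (fst t, \<not> snd t)"

definition letters :: "'a set \<Rightarrow> 'a letter set" where
  "letters S = S \<times> (UNIV :: bool set)"

definition reduced :: "'a word \<Rightarrow> bool" where
  "reduced w \<longleftrightarrow> (\<forall>i. Suc i < length w \<longrightarrow> w ! Suc i \<noteq> flip (w ! i))"

definition fg_verts :: "'a set \<Rightarrow> 'a word set" where
  "fg_verts S = {w. set w \<subseteq> letters S \<and> reduced w}"

definition step :: "'a word \<Rightarrow> 'a letter \<Rightarrow> 'a word" where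
  "step w t = (if w \<noteq> [] \<and> last w = flip t then butlast w else w @ [t])"

definition fg_mult :: "'a word \<Rightarrow> 'a word \<Rightarrow> 'a word" where
  "fg_mult u v = foldl step u v"

definition fg_inv :: "'a word \<Rightarrow> 'a word" where
  "fg_inv w = rev (map flip w)"

definition trans_p :: "('a letter \<Rightarrow> real) \<Rightarrow> 'a word \<Rightarrow> 'a word \<Rightarrow> real" where
  "trans_p mu x y = (case fg_mult (fg_inv x) y of [t] \<Rightarrow> mu t | _ \<Rightarrow> 0)"

text \<open>The reversibility measure m(x) = prod p(x_{i-1},x_i)/p(x_i,x_{i-1}) along the
  geodesic from the root o = e (empty word) to x; the geodesic consists of the prefixes of x.\<close>
definition rev_meas :: "('a letter \<Rightarrow> real) \<Rightarrow> 'a word \<Rightarrow> real" where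
  "rev_meas mu x = (\<Prod>i\<in>{1..length x}.
      trans_p mu (take (i - 1) x) (take i x) / trans_p mu (take i x) (take (i - 1) x))"

definition l2m :: "'a set \<Rightarrow> ('a letter \<Rightarrow> real) \<Rightarrow> ('a word \<Rightarrow> complex) set" where
  "l2m S mu = {f. (\<forall>x. x \<notin> fg_verts S \<longrightarrow> f x = 0) \<and>
      (\<lambda>x. rev_meas mu x * (cmod (f x))\<^sup>2) summable_on fg_verts S}"

definition l2norm :: "'a set \<Rightarrow> ('a letter \<Rightarrow> real) \<Rightarrow> ('a word \<Rightarrow> complex) \<Rightarrow> real" where
  "l2norm S mu f = sqrt (\<Sum>\<^sub>\<infinity>x\<in>fg_verts S. rev_meas mu x * (cmod (f x))\<^sup>2)"

definition transP :: "'a set \<Rightarrow> ('a letter \<Rightarrow> real) \<Rightarrow> ('a word \<Rightarrow> complex) \<Rightarrow> 'a word \<Rightarrow> complex" where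
  "transP S mu f x = (if x \<in> fg_verts S
      then (\<Sum>\<^sub>\<infinity>y\<in>fg_verts S. complex_of_real (trans_p mu x y) * f y) else 0)"

definition shiftP :: "'a set \<Rightarrow> ('a letter \<Rightarrow> real) \<Rightarrow> complex \<Rightarrow> ('a word \<Rightarrow> complex) \<Rightarrow> 'a word \<Rightarrow> complex" where
  "shiftP S mu lam f x = lam * f x - transP S mu f x"

definition bounded_op_l2 :: "'a set \<Rightarrow> ('a letter \<Rightarrow> real) \<Rightarrow>
    (('a word \<Rightarrow> complex) \<Rightarrow> 'a word \<Rightarrow> complex) \<Rightarrow> bool" where
  "bounded_op_l2 S mu R \<longleftrightarrow>
     (\<forall>f\<in>l2m S mu. R f \<in> l2m S mu) \<and>
     (\<forall>f\<in>l2m S mu. \<forall>g\<in>l2m S mu. \<forall>a b. R (\<lambda>x. a * f x + b * g x) = (\<lambda>x. a * R f x + b * R g x)) \<and>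
     (\<exists>C. \<forall>f\<in>l2m S mu. l2norm S mu (R f) \<le> C * l2norm S mu f)"

definition resP :: "'a set \<Rightarrow> ('a letter \<Rightarrow> real) \<Rightarrow> complex set" where
  "resP S mu = {lam. \<exists>R. bounded_op_l2 S mu R \<and>
      (\<forall>f\<in>l2m S mu. shiftP S mu lam (R f) = f \<and> R (shiftP S mu lam f) = f)}"

definition greenG :: "'a set \<Rightarrow> ('a letter \<Rightarrow> real) \<Rightarrow> 'a word \<Rightarrow> 'a word \<Rightarrow> complex \<Rightarrow> complex" where
  "greenG S mu x y lam =
     (SOME g. g \<in> l2m S mu \<and> shiftP S mu lam g = (\<lambda>z. if z = y then 1 else 0)) x"

definition resP_star :: "'a set \<Rightarrow> ('a letter \<Rightarrow> real) \<Rightarrow> complex set" where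
  "resP_star S mu = {lam \<in> resP S mu. \<forall>x\<in>fg_verts S. greenG S mu x x lam \<noteq> 0}"

end

theory Submission
  imports Defs
begin


lemma flip_flip[simp]: "flip (flip t) = t" by (simp add: flip_def)
lemma flip_neq[simp]: "flip t \<noteq> t" "t \<noteq> flip t" by (auto simp: flip_def prod_eq_iff)
lemma flip_eq_iff: "flip a = b \<longleftrightarrow> a = flip b" by (auto simp: flip_def prod_eq_iff)

lemma reduced_Nil[simp]: "reduced []" by (simp add: reduced_def)
lemma reduced_single[simp]: "reduced [t]" by (simp add: reduced_def)

lemma reduced_snoc: "reduced (w @ [t]) \<longleftrightarrow> reduced w \<and> (w \<noteq> [] \<longrightarrow> last w \<noteq> flip t)"
proof -
  have A: "reduced (w @ [t]) \<Longrightarrow> reduced w"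
    unfolding reduced_def
    by (metis (no_types, lifting) Suc_lessD length_append_singleton less_SucI nth_append_left)
  have B: "reduced (w @ [t]) \<Longrightarrow> w \<noteq> [] \<Longrightarrow> last w \<noteq> flip t"
  proof
    assume r: "reduced (w @ [t])" and ne: "w \<noteq> []" and l: "last w = flip t"
    let ?i = "length w - 1"
    have "Suc ?i < length (w @ [t])" using ne by simp
    then have "(w@[t]) ! Suc ?i \<noteq> flip ((w@[t]) ! ?i)" using r by (simp add: reduced_def)
    moreover have "(w@[t]) ! Suc ?i = t" using ne by (simp add: nth_append)
    moreover have "(w@[t]) ! ?i = last w" using ne by (simp add: nth_append last_conv_nth)
    ultimately show False using l by simp
  qed
  have C: "reduced w \<Longrightarrow> (w \<noteq> [] \<longrightarrow> last w \<noteq> flip t) \<Longrightarrow> reduced (w @ [t])"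
    unfolding reduced_def
  proof (intro allI impI)
    fix i assume r: "\<forall>i. Suc i < length w \<longrightarrow> w ! Suc i \<noteq> flip (w ! i)"
      and l: "w \<noteq> [] \<longrightarrow> last w \<noteq> flip t" and i: "Suc i < length (w @ [t])"
    show "(w @ [t]) ! Suc i \<noteq> flip ((w @ [t]) ! i)"
    proof (cases "Suc i < length w")
      case True then show ?thesis using r by (simp add: nth_append)
    next
      case False
      then have "Suc i = length w" using i by simp
      then have wi: "i = length w - 1" "w \<noteq> []" by auto
      then have "w \<noteq> []" "(w@[t]) ! Suc i = t" "(w@[t]) ! i = last w"
        by (auto simp: nth_append last_conv_nth)
      then show ?thesis using l by (metis flip_flip)
    qed
  qed
  show ?thesis using A B C by blast
qed

lemma reduced_butlast: "reduced w \<Longrightarrow> reduced (butlast w)"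
  by (metis append_butlast_last_id butlast.simps(1) reduced_snoc)


lemma flip_letters: "t \<in> letters S \<Longrightarrow> flip t \<in> letters S"
  by (auto simp: letters_def flip_def)

lemma reduced_step: "reduced w \<Longrightarrow> reduced (step w t)"
  by (auto simp: step_def reduced_butlast reduced_snoc)

lemma set_step: "set w \<subseteq> A \<Longrightarrow> t \<in> A \<Longrightarrow> set (step w t) \<subseteq> A"
  by (auto simp: step_def dest: in_set_butlastD)

lemma fg_mult_snoc: "fg_mult u (v @ [t]) = step (fg_mult u v) t"
  by (simp add: fg_mult_def)
lemma fg_mult_Nil[simp]: "fg_mult u [] = u" by (simp add: fg_mult_def)
lemma fg_mult_single: "fg_mult u [t] = step u t" by (simp add: fg_mult_def)

lemma step_snoc_flip: "step (w @ [t]) (flip t) = w"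
  by (simp add: step_def)

lemma step_step_flip: "reduced u \<Longrightarrow> step (step u t) (flip t) = u"
proof (cases "u \<noteq> [] \<and> last u = flip t")
  case True
  assume r: "reduced u"
  then have u: "u = butlast u @ [flip t]" using True by (metis append_butlast_last_id)
  then have "butlast u = [] \<or> last (butlast u) \<noteq> t" using r
    by (metis flip_flip reduced_snoc)
  moreover have "step u t = butlast u" using True by (simp add: step_def)
  moreover have "step (butlast u) (flip t) = butlast u @ [flip t]"
    using calculation(1) by (auto simp: step_def)
  ultimately show ?thesis using u by simp
next
  case False
  then have "step u t = u @ [t]" by (auto simp: step_def)
  then show ?thesis by (simp add: step_snoc_flip)
qed

lemma step_reduced_snoc: "reduced (w @ [t]) \<Longrightarrow> step w t = w @ [t]"
  by (auto simp: step_def reduced_snoc)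

lemma reduced_fg_mult: "reduced u \<Longrightarrow> reduced (fg_mult u v)"
  by (induct v rule: rev_induct) (auto simp: fg_mult_snoc reduced_step)

lemma set_fg_mult: "set u \<subseteq> A \<Longrightarrow> set v \<subseteq> A \<Longrightarrow> set (fg_mult u v) \<subseteq> A"
proof (induct v rule: rev_induct)
  case (snoc x xs)
  then show ?case by (metis fg_mult_snoc set_step set_append le_sup_iff list.set(2) insert_subset)
qed simp

lemma fg_mult_Nil_left: "reduced w \<Longrightarrow> fg_mult [] w = w"
proof (induct w rule: rev_induct)
  case (snoc x xs)
  then show ?case using reduced_snoc[of xs x] by (simp add: fg_mult_snoc step_reduced_snoc)
qed simp

lemma fg_mult_step: "reduced a \<Longrightarrow> reduced w \<Longrightarrow> fg_mult a (step w t) = step (fg_mult a w) t"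
proof (cases "w \<noteq> [] \<and> last w = flip t")
  case True
  assume ra: "reduced a" and rw: "reduced w"
  have w: "w = butlast w @ [flip t]" using True by (metis append_butlast_last_id)
  have "fg_mult a w = step (fg_mult a (butlast w)) (flip t)" by (subst w) (simp add: fg_mult_snoc)
  then have "step (fg_mult a w) t = fg_mult a (butlast w)"
    using step_step_flip[OF reduced_fg_mult[OF ra], of "butlast w" "flip t"] by simp
  then show ?thesis using True by (simp add: step_def)
next
  case False
  then have "step w t = w @ [t]" by (auto simp: step_def)
  then show ?thesis by (simp add: fg_mult_snoc)
qed

lemma fg_assoc: "reduced a \<Longrightarrow> reduced b \<Longrightarrow> fg_mult (fg_mult a b) c = fg_mult a (fg_mult b c)"
proof (induct c rule: rev_induct)
  case (snoc t c)
  then show ?case by (simp add: fg_mult_snoc fg_mult_step reduced_fg_mult)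
qed simp

lemma reduced_Cons: "reduced (t # w) \<longleftrightarrow> reduced w \<and> (w \<noteq> [] \<longrightarrow> hd w \<noteq> flip t)"
  unfolding reduced_def
  apply (auto simp: nth_Cons split: nat.splits)
   apply (metis Suc_less_eq hd_conv_nth length_greater_0_conv nth_Cons_0 nth_Cons_Suc)
  by (metis One_nat_def hd_conv_nth less_Suc_eq_0_disj list.size(3) not_less_zero)

lemma fg_inv_snoc: "fg_inv (w @ [t]) = flip t # fg_inv w" by (simp add: fg_inv_def)
lemma fg_inv_inv[simp]: "fg_inv (fg_inv w) = w" by (simp add: fg_inv_def rev_map comp_def)
lemma fg_inv_Nil[simp]: "fg_inv [] = []" by (simp add: fg_inv_def)

lemma reduced_fg_inv: "reduced w \<Longrightarrow> reduced (fg_inv w)"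
proof (induct w rule: rev_induct)
  case (snoc t w)
  have "w \<noteq> [] \<Longrightarrow> hd (fg_inv w) = flip (last w)"
    by (simp add: fg_inv_def hd_rev last_map)
  with snoc show ?case
    by (auto simp: fg_inv_snoc reduced_Cons reduced_snoc fg_inv_def flip_eq_iff)
qed simp

lemma set_fg_inv: "set w \<subseteq> letters S \<Longrightarrow> set (fg_inv w) \<subseteq> letters S"
  by (auto simp: fg_inv_def flip_letters)

lemma fg_mult_cancel: "reduced (u @ w) \<Longrightarrow> fg_mult (u @ w) (fg_inv w) = u"
proof (induct w arbitrary: u rule: rev_induct)
  case (snoc t w)
  have r: "reduced (u @ w)" using snoc.prems reduced_snoc[of "u@w" t] by simp
  have "fg_mult (u @ w @ [t]) (fg_inv (w @ [t])) = fg_mult (step (u @ w @ [t]) (flip t)) (fg_inv w)"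
    by (simp add: fg_inv_snoc fg_mult_def)
  also have "\<dots> = fg_mult (u @ w) (fg_inv w)" using step_snoc_flip[of "u@w" t] by simp
  finally show ?case using snoc.hyps[OF r] by simp
qed simp

lemma fg_mult_inv_right: "reduced w \<Longrightarrow> fg_mult w (fg_inv w) = []"
  using fg_mult_cancel[of "[]" w] by simp

lemma fg_mult_inv_left: "reduced w \<Longrightarrow> fg_mult (fg_inv w) w = []"
  using fg_mult_inv_right[OF reduced_fg_inv, of w] by simp




lemma verts_Nil[simp]: "[] \<in> fg_verts S" by (simp add: fg_verts_def)
lemma verts_reduced: "x \<in> fg_verts S \<Longrightarrow> reduced x" by (simp add: fg_verts_def)
lemma verts_mult: "x \<in> fg_verts S \<Longrightarrow> y \<in> fg_verts S \<Longrightarrow> fg_mult x y \<in> fg_verts S"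
  by (simp add: fg_verts_def reduced_fg_mult set_fg_mult)
lemma verts_inv: "x \<in> fg_verts S \<Longrightarrow> fg_inv x \<in> fg_verts S"
  by (simp add: fg_verts_def reduced_fg_inv set_fg_inv)
lemma verts_step: "x \<in> fg_verts S \<Longrightarrow> t \<in> letters S \<Longrightarrow> step x t \<in> fg_verts S"
  by (simp add: fg_verts_def reduced_step set_step)
lemma verts_single: "t \<in> letters S \<Longrightarrow> [t] \<in> fg_verts S"
  by (simp add: fg_verts_def)

lemma mult_inv_step: "reduced z \<Longrightarrow> fg_mult (fg_inv z) (step z t) = [t]"
proof -
  assume r: "reduced z"
  have "fg_mult (fg_inv z) (step z t) = fg_mult (fg_inv z) (fg_mult z [t])" by (simp add: fg_mult_single)
  also have "\<dots> = fg_mult (fg_mult (fg_inv z) z) [t]"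
    using fg_assoc[OF reduced_fg_inv[OF r] r] by simp
  also have "\<dots> = [t]" using r by (simp add: fg_mult_inv_left fg_mult_single step_def)
  finally show ?thesis .
qed

lemma step_inj: "reduced z \<Longrightarrow> step z t = step z t' \<Longrightarrow> t = t'"
  by (metis list.inject mult_inv_step)

lemma nbr: assumes "z \<in> fg_verts S" "y \<in> fg_verts S"
  shows "fg_mult (fg_inv z) y = [t] \<longleftrightarrow> t \<in> letters S \<and> y = step z t"
proof
  assume h: "fg_mult (fg_inv z) y = [t]"
  have rz: "reduced z" "reduced y" using assms verts_reduced by auto
  have "fg_mult z (fg_mult (fg_inv z) y) = fg_mult (fg_mult z (fg_inv z)) y"
    using fg_assoc[OF rz(1) reduced_fg_inv[OF rz(1)]] by simp
  also have "\<dots> = y" using rz by (simp add: fg_mult_inv_right fg_mult_Nil_left)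
  finally have "y = step z t" using h by (simp add: fg_mult_single)
  moreover have "t \<in> letters S"
    using verts_mult[OF verts_inv[OF assms(1)] assms(2)] h by (simp add: fg_verts_def)
  ultimately show "t \<in> letters S \<and> y = step z t" by simp
next
  assume "t \<in> letters S \<and> y = step z t"
  then show "fg_mult (fg_inv z) y = [t]" using assms verts_reduced mult_inv_step by blast
qed

lemma p_step: "reduced z \<Longrightarrow> trans_p mu z (step z t) = mu t"
  by (simp add: trans_p_def mult_inv_step)

lemma p_cases: assumes "z \<in> fg_verts S" "y \<in> fg_verts S"
  shows "(\<exists>t\<in>letters S. y = step z t \<and> trans_p mu z y = mu t) \<or>
         ((\<forall>t\<in>letters S. y \<noteq> step z t) \<and> trans_p mu z y = 0)"
proof (cases "\<exists>t. fg_mult (fg_inv z) y = [t]")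
  case True
  then obtain t where eq: "fg_mult (fg_inv z) y = [t]" by blast
  then have yt: "t \<in> letters S \<and> y = step z t" using nbr[OF assms] by blast
  have "trans_p mu z y = mu t" using eq by (simp add: trans_p_def)
  then show ?thesis using yt by blast
next
  case False
  then have "trans_p mu z y = 0"
    by (auto simp: trans_p_def split: list.splits)
  moreover have "\<forall>t\<in>letters S. y \<noteq> step z t" using False nbr[OF assms] by blast
  ultimately show ?thesis by simp
qed

lemma p_zero: "z \<in> fg_verts S \<Longrightarrow> y \<in> fg_verts S \<Longrightarrow> (\<forall>t\<in>letters S. y \<noteq> step z t) \<Longrightarrow> trans_p mu z y = 0"
  using p_cases by blast

lemma p_nonneg: "(\<And>t. t \<in> letters S \<Longrightarrow> mu t > 0) \<Longrightarrow> z \<in> fg_verts S \<Longrightarrow> y \<in> fg_verts S \<Longrightarrow> trans_p mu z y \<ge> 0"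
  using p_cases[of z S y mu] by force

lemma p_has_sum:
  assumes z: "z \<in> fg_verts S" and h: "(mu has_sum 1) (letters S)"
  shows "(trans_p mu z has_sum 1) (fg_verts S)"
proof -
  have rz: "reduced z" using z verts_reduced by auto
  have bij: "bij_betw (step z) (letters S) (step z ` letters S)"
    unfolding bij_betw_def inj_on_def using step_inj[OF rz] by blast
  have "((\<lambda>t. trans_p mu z (step z t)) has_sum 1) (letters S)"
    using h by (simp add: p_step[OF rz])
  then have "(trans_p mu z has_sum 1) (step z ` letters S)"
    using has_sum_reindex_bij_betw[OF bij] by blast
  moreover have "step z ` letters S \<subseteq> fg_verts S" using verts_step[OF z] by auto
  ultimately show ?thesis
    by (subst has_sum_cong_neutral[where T="step z ` letters S" and g="trans_p mu z"])
       (auto intro!: p_zero z)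
qed

lemma rev_meas_Nil[simp]: "rev_meas mu [] = 1" by (simp add: rev_meas_def)

lemma rev_meas_snoc: assumes "reduced (w @ [t])"
  shows "rev_meas mu (w @ [t]) = rev_meas mu w * (mu t / mu (flip t))"
proof -
  have rw: "reduced w" using assms reduced_snoc by blast
  let ?n = "length w"
  let ?F = "\<lambda>x i. trans_p mu (take (i - 1) x) (take i x) / trans_p mu (take i x) (take (i - 1) x)"
  have "rev_meas mu (w @ [t]) = (\<Prod>i\<in>{1..Suc ?n}. ?F (w@[t]) i)" by (simp add: rev_meas_def)
  also have "\<dots> = (\<Prod>i\<in>{1..?n}. ?F (w@[t]) i) * ?F (w@[t]) (Suc ?n)"
    by (simp add: prod.cl_ivl_Suc)
  also have "(\<Prod>i\<in>{1..?n}. ?F (w@[t]) i) = (\<Prod>i\<in>{1..?n}. ?F w i)"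
    by (rule prod.cong) auto
  also have "?F (w@[t]) (Suc ?n) = mu t / mu (flip t)"
  proof -
    have "trans_p mu w (w @ [t]) = mu t"
      using p_step[OF rw, of mu t] step_reduced_snoc[OF assms] by simp
    moreover have "trans_p mu (w @ [t]) w = mu (flip t)"
      using p_step[OF assms, of mu "flip t"] step_snoc_flip[of w t] by simp
    ultimately show ?thesis by simp
  qed
  finally show ?thesis by (simp add: rev_meas_def)
qed

lemma rev_meas_pos:
  assumes mpos: "\<And>t. t \<in> letters S \<Longrightarrow> mu t > 0"
  shows "w \<in> fg_verts S \<Longrightarrow> rev_meas mu w > 0"
proof (induct w rule: rev_induct)
  case (snoc t w)
  then have "reduced (w @ [t])" "w \<in> fg_verts S" "t \<in> letters S"
    by (auto simp: fg_verts_def reduced_snoc)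
  moreover have "flip t \<in> letters S" using calculation flip_letters by blast
  ultimately show ?case using snoc mpos by (simp add: rev_meas_snoc)
qed simp

lemma rev_meas_step:
  assumes mpos: "\<And>t. t \<in> letters S \<Longrightarrow> mu t > 0"
    and w: "w \<in> fg_verts S" and t: "t \<in> letters S"
  shows "rev_meas mu (step w t) = rev_meas mu w * (mu t / mu (flip t))"
proof (cases "w \<noteq> [] \<and> last w = flip t")
  case True
  have rw: "reduced w" using w verts_reduced by auto
  have ww: "w = butlast w @ [flip t]" using True by (metis append_butlast_last_id)
  have "rev_meas mu w = rev_meas mu (butlast w) * (mu (flip t) / mu t)"
    using rev_meas_snoc[of "butlast w" "flip t" mu] rw ww by simp
  moreover have "step w t = butlast w" using True by (simp add: step_def)
  moreover have "mu t > 0" "mu (flip t) > 0" using mpos[OF t] mpos[OF flip_letters[OF t]] by auto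
  ultimately show ?thesis by (simp add: field_simps)
next
  case False
  then have s: "step w t = w @ [t]" by (auto simp: step_def)
  have "reduced (w @ [t])" using reduced_step[of w t] w verts_reduced s by metis
  then show ?thesis using s rev_meas_snoc by simp
qed

lemma rev_meas_mult:
  assumes mpos: "\<And>t. t \<in> letters S \<Longrightarrow> mu t > 0" and a: "a \<in> fg_verts S"
  shows "z \<in> fg_verts S \<Longrightarrow> rev_meas mu (fg_mult a z) = rev_meas mu a * rev_meas mu z"
proof (induct z rule: rev_induct)
  case (snoc t z)
  then have r: "reduced (z @ [t])" and z: "z \<in> fg_verts S" and t: "t \<in> letters S"
    by (auto simp: fg_verts_def reduced_snoc)
  have "rev_meas mu (fg_mult a (z @ [t])) = rev_meas mu (step (fg_mult a z) t)"
    by (simp add: fg_mult_snoc)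
  also have "\<dots> = rev_meas mu (fg_mult a z) * (mu t / mu (flip t))"
    by (rule rev_meas_step[OF mpos verts_mult[OF a z] t])
  also have "\<dots> = rev_meas mu a * rev_meas mu (z @ [t])"
    using snoc z by (simp add: rev_meas_snoc[OF r])
  finally show ?case .
qed simp

lemma reversible:
  assumes mpos: "\<And>t. t \<in> letters S \<Longrightarrow> mu t > 0"
    and z: "z \<in> fg_verts S" and y: "y \<in> fg_verts S"
  shows "rev_meas mu z * trans_p mu z y = rev_meas mu y * trans_p mu y z"
proof (cases "\<exists>t\<in>letters S. y = step z t")
  case True
  then obtain t where t: "t \<in> letters S" and yt: "y = step z t" by blast
  have rz: "reduced z" "reduced y" using z y verts_reduced by auto
  have "trans_p mu z y = mu t" using p_step[OF rz(1)] yt by simp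
  moreover have "z = step y (flip t)" using yt step_step_flip[OF rz(1)] by simp
  then have "trans_p mu y z = mu (flip t)" using p_step[OF rz(2)] by metis
  moreover have "rev_meas mu y = rev_meas mu z * (mu t / mu (flip t))"
    using rev_meas_step[OF mpos z t] yt by simp
  moreover have "mu (flip t) > 0" using mpos[OF flip_letters[OF t]] by auto
  ultimately show ?thesis by simp
next
  case False
  then have "trans_p mu z y = 0" using p_zero z y by blast
  moreover have "trans_p mu y z = 0"
  proof (rule p_zero[OF y z], intro ballI notI)
    fix s assume s: "s \<in> letters S" and "z = step y s"
    then have "y = step z (flip s)" using step_step_flip y verts_reduced by metis
    then show False using False flip_letters s by blast
  qed
  ultimately show ?thesis by simp
qed




locale fgw =
  fixes S :: "'a set" and mu :: "'a letter \<Rightarrow> real"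
  assumes mpos: "\<And>t. t \<in> letters S \<Longrightarrow> mu t > 0"
    and hs: "(mu has_sum 1) (letters S)"
begin

abbreviation "V \<equiv> fg_verts S"
abbreviation "m \<equiv> rev_meas mu"
abbreviation "p \<equiv> trans_p mu"

lemma m_pos: "z \<in> V \<Longrightarrow> m z > 0" using rev_meas_pos[of S mu, OF mpos] by blast
lemma p_nn: "z \<in> V \<Longrightarrow> y \<in> V \<Longrightarrow> p z y \<ge> 0" using p_nonneg[of S mu, OF mpos] by blast

lemma l2m_zero: "f \<in> l2m S mu \<Longrightarrow> z \<notin> V \<Longrightarrow> f z = 0" by (simp add: l2m_def)
lemma l2m_sum: "f \<in> l2m S mu \<Longrightarrow> (\<lambda>x. m x * (cmod (f x))\<^sup>2) summable_on V" by (simp add: l2m_def)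

lemma delta_l2m: "y \<in> V \<Longrightarrow> (\<lambda>z. if z = y then 1 else 0) \<in> l2m S mu"
  unfolding l2m_def
  by (auto intro!: finite_nonzero_values_imp_summable_on
      simp: finite_subset[of _ "{y}"] subset_iff)

lemma scale_l2m: "f \<in> l2m S mu \<Longrightarrow> (\<lambda>z. c * f z) \<in> l2m S mu"
proof -
  assume f: "f \<in> l2m S mu"
  have "(\<lambda>x. (cmod c)\<^sup>2 * (m x * (cmod (f x))\<^sup>2)) summable_on V"
    using summable_on_cmult_right[OF l2m_sum[OF f]] by blast
  then show ?thesis using f
    by (simp add: l2m_def norm_mult power_mult_distrib mult.commute mult.left_commute)
qed

lemma restrict_l2m: "f \<in> l2m S mu \<Longrightarrow> (\<lambda>z. if z \<in> B then f z else 0) \<in> l2m S mu"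
proof -
  assume f: "f \<in> l2m S mu"
  have "(\<lambda>x. m x * (cmod (if x \<in> B then f x else 0))\<^sup>2) summable_on V"
    by (rule summable_on_comparison_test[OF l2m_sum[OF f]])
       (auto simp: m_pos less_imp_le)
  then show ?thesis using f by (simp add: l2m_def)
qed

lemma transP_scale: "transP S mu (\<lambda>z. c * f z) x = c * transP S mu f x"
proof -
  have "(\<Sum>\<^sub>\<infinity>y\<in>V. complex_of_real (p x y) * (c * f y)) = (\<Sum>\<^sub>\<infinity>y\<in>V. c * (complex_of_real (p x y) * f y))"
    by (simp add: mult.left_commute)
  also have "\<dots> = c * (\<Sum>\<^sub>\<infinity>y\<in>V. complex_of_real (p x y) * f y)" by (rule infsum_cmult_right')
  finally show ?thesis by (simp add: transP_def)
qed

lemma shiftP_scale: "shiftP S mu lam (\<lambda>z. c * f z) = (\<lambda>z. c * shiftP S mu lam f z)"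
  by (auto simp: shiftP_def transP_scale algebra_simps)

lemma amgm: "(a::real) \<ge> 0 \<Longrightarrow> b \<ge> 0 \<Longrightarrow> a * b \<le> (a\<^sup>2 + b\<^sup>2) / 2"
proof -
  have "0 \<le> (a - b)\<^sup>2" by simp
  then show ?thesis by (simp add: power2_eq_square algebra_simps)
qed

lemma prod_summable:
  assumes f: "f \<in> l2m S mu"
  shows "(\<lambda>(z,y). m z * p z y * (cmod (f z))\<^sup>2) summable_on V \<times> V"
proof -
  have "(\<lambda>zy. case zy of (z,y) \<Rightarrow> m z * p z y * (cmod (f z))\<^sup>2) summable_on Sigma V (\<lambda>_. V)"
  proof (rule summable_on_SigmaI[where g="\<lambda>z. m z * (cmod (f z))\<^sup>2"])
    fix z assume z: "z \<in> V"
    have "((\<lambda>y. (m z * (cmod (f z))\<^sup>2) * p z y) has_sum (m z * (cmod (f z))\<^sup>2) * 1) V"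
      by (rule has_sum_cmult_right[OF p_has_sum[OF z hs]])
    then show "((\<lambda>y. case (z, y) of (z,y) \<Rightarrow> m z * p z y * (cmod (f z))\<^sup>2) has_sum m z * (cmod (f z))\<^sup>2) V"
      by (simp add: algebra_simps)
  next
    show "(\<lambda>z. m z * (cmod (f z))\<^sup>2) summable_on V" by (rule l2m_sum[OF f])
  next
    fix z y assume "z \<in> V" "y \<in> V"
    then show "0 \<le> (case (z, y) of (z,y) \<Rightarrow> m z * p z y * (cmod (f z))\<^sup>2)"
      using m_pos p_nn by (simp add: less_imp_le)
  qed
  then show ?thesis by simp
qed

lemma prod_summable2:
  assumes h: "h \<in> l2m S mu"
  shows "(\<lambda>(z,y). m z * p z y * (cmod (h y))\<^sup>2) summable_on V \<times> V"
proof -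
  have "(\<lambda>(y,z). m y * p y z * (cmod (h y))\<^sup>2) summable_on V \<times> V" by (rule prod_summable[OF h])
  then have "(\<lambda>(z,y). m y * p y z * (cmod (h y))\<^sup>2) summable_on V \<times> V"
    using summable_on_swap[of "\<lambda>(y,z). m y * p y z * (cmod (h y))\<^sup>2" V V] by simp
  then show ?thesis
    by (rule summable_on_cong[THEN iffD1, rotated]) (auto simp: reversible[OF mpos])
qed

lemma K_summable:
  assumes f: "f \<in> l2m S mu" and h: "h \<in> l2m S mu"
  shows "(\<lambda>(z,y). complex_of_real (m z) * complex_of_real (p z y) * f z * h y) summable_on V \<times> V"
proof -
  define K where "K = (\<lambda>z y. complex_of_real (m z) * complex_of_real (p z y) * f z * h y)"
  define Q1 where "Q1 = (\<lambda>z y. m z * p z y * (cmod (f z))\<^sup>2)"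
  define Q2 where "Q2 = (\<lambda>z y. m z * p z y * (cmod (h y))\<^sup>2)"
  have s1: "(\<lambda>(z,y). Q1 z y) summable_on V \<times> V" unfolding Q1_def by (rule prod_summable[OF f])
  have s2: "(\<lambda>(z,y). Q2 z y) summable_on V \<times> V" unfolding Q2_def by (rule prod_summable2[OF h])
  have s12: "(\<lambda>zy. (\<lambda>(z,y). Q1 z y) zy + (\<lambda>(z,y). Q2 z y) zy) summable_on V \<times> V"
    by (rule summable_on_add[OF s1 s2])
  have sB: "(\<lambda>(z,y). Q1 z y + Q2 z y) summable_on V \<times> V"
    using s12 by (simp add: case_prod_beta')
  have nb: "norm (K z y) \<le> Q1 z y + Q2 z y" if zy: "z \<in> V" "y \<in> V" for z y
  proof -
    have m0: "m z \<ge> 0" using m_pos[OF zy(1)] by simp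
    have p0: "p z y \<ge> 0" using p_nn[OF zy] .
    have mp: "m z * p z y \<ge> 0" using m0 p0 by simp
    have "norm (K z y) = (m z * p z y) * (cmod (f z) * cmod (h y))"
      unfolding K_def using m0 p0 by (simp add: norm_mult)
    also have "\<dots> \<le> (m z * p z y) * (((cmod (f z))\<^sup>2 + (cmod (h y))\<^sup>2) / 2)"
      by (rule mult_left_mono[OF amgm mp]) auto
    also have "\<dots> \<le> Q1 z y + Q2 z y"
    proof -
      have "Q1 z y \<ge> 0" "Q2 z y \<ge> 0" unfolding Q1_def Q2_def using mp by simp_all
      then have le: "(Q1 z y + Q2 z y) / 2 \<le> Q1 z y + Q2 z y" by simp
      have "(m z * p z y) * (((cmod (f z))\<^sup>2 + (cmod (h y))\<^sup>2) / 2) = (Q1 z y + Q2 z y) / 2"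
        unfolding Q1_def Q2_def by (simp add: algebra_simps)
      with le show ?thesis by simp
    qed
    finally show ?thesis .
  qed
  have "(\<lambda>(z,y). norm (K z y)) summable_on V \<times> V"
    by (rule summable_on_comparison_test[OF sB]) (auto intro: nb)
  then have "(\<lambda>zy. norm ((\<lambda>(z,y). K z y) zy)) summable_on V \<times> V"
    by (simp add: case_prod_beta')
  then have "(\<lambda>(z,y). K z y) summable_on V \<times> V" by (rule abs_summable_summable)
  then show ?thesis unfolding K_def .
qed

lemma diag_summable:
  assumes f: "f \<in> l2m S mu" and h: "h \<in> l2m S mu"
  shows "(\<lambda>z. complex_of_real (m z) * f z * h z) summable_on V"
proof -
  define Q1 where "Q1 = (\<lambda>z. m z * (cmod (f z))\<^sup>2)"
  define Q2 where "Q2 = (\<lambda>z. m z * (cmod (h z))\<^sup>2)"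
  have sB: "(\<lambda>z. Q1 z + Q2 z) summable_on V" unfolding Q1_def Q2_def
    by (rule summable_on_add[OF l2m_sum[OF f] l2m_sum[OF h]])
  have nb: "norm (complex_of_real (m z) * f z * h z) \<le> Q1 z + Q2 z" if z: "z \<in> V" for z
  proof -
    have mp: "m z \<ge> 0" using m_pos[OF z] by simp
    have "norm (complex_of_real (m z) * f z * h z) = m z * (cmod (f z) * cmod (h z))"
      using mp by (simp add: norm_mult)
    also have "\<dots> \<le> m z * (((cmod (f z))\<^sup>2 + (cmod (h z))\<^sup>2) / 2)"
      by (rule mult_left_mono[OF amgm mp]) auto
    also have "\<dots> \<le> Q1 z + Q2 z"
    proof -
      have "Q1 z \<ge> 0" "Q2 z \<ge> 0" unfolding Q1_def Q2_def using mp by simp_all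
      then have le: "(Q1 z + Q2 z) / 2 \<le> Q1 z + Q2 z" by simp
      have "m z * (((cmod (f z))\<^sup>2 + (cmod (h z))\<^sup>2) / 2) = (Q1 z + Q2 z) / 2"
        unfolding Q1_def Q2_def by (simp add: algebra_simps)
      with le show ?thesis by simp
    qed
    finally show ?thesis .
  qed
  have "(\<lambda>z. norm (complex_of_real (m z) * f z * h z)) summable_on V"
    by (rule summable_on_comparison_test[OF sB]) (auto intro: nb)
  then show ?thesis by (rule abs_summable_summable)
qed

lemma symmetry:
  assumes f: "f \<in> l2m S mu" and h: "h \<in> l2m S mu"
  shows "(\<Sum>\<^sub>\<infinity>z\<in>V. complex_of_real (m z) * f z * transP S mu h z)
       = (\<Sum>\<^sub>\<infinity>y\<in>V. complex_of_real (m y) * h y * transP S mu f y)"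
proof -
  let ?K = "\<lambda>z y. complex_of_real (m z) * complex_of_real (p z y) * f z * h y"
  have "(\<Sum>\<^sub>\<infinity>z\<in>V. complex_of_real (m z) * f z * transP S mu h z) = (\<Sum>\<^sub>\<infinity>z\<in>V. \<Sum>\<^sub>\<infinity>y\<in>V. ?K z y)"
  proof (rule infsum_cong)
    fix z assume z: "z \<in> V"
    have "complex_of_real (m z) * f z * transP S mu h z
        = (complex_of_real (m z) * f z) * (\<Sum>\<^sub>\<infinity>y\<in>V. complex_of_real (p z y) * h y)"
      using z by (simp add: transP_def)
    also have "\<dots> = (\<Sum>\<^sub>\<infinity>y\<in>V. (complex_of_real (m z) * f z) * (complex_of_real (p z y) * h y))"
      by (rule infsum_cmult_right'[symmetric])
    finally show "complex_of_real (m z) * f z * transP S mu h z = (\<Sum>\<^sub>\<infinity>y\<in>V. ?K z y)"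
      by (simp add: algebra_simps)
  qed
  also have "\<dots> = (\<Sum>\<^sub>\<infinity>y\<in>V. \<Sum>\<^sub>\<infinity>z\<in>V. ?K z y)"
    by (rule infsum_swap_banach) (rule K_summable[OF f h])
  also have "\<dots> = (\<Sum>\<^sub>\<infinity>y\<in>V. complex_of_real (m y) * h y * transP S mu f y)"
  proof (rule infsum_cong)
    fix y assume y: "y \<in> V"
    have "(\<Sum>\<^sub>\<infinity>z\<in>V. ?K z y) = (\<Sum>\<^sub>\<infinity>z\<in>V. (complex_of_real (m y) * h y) * (complex_of_real (p y z) * f z))"
    proof (rule infsum_cong)
      fix z assume z: "z \<in> V"
      have "m z * p z y = m y * p y z" by (rule reversible[OF mpos z y])
      then have "complex_of_real (m z) * complex_of_real (p z y) = complex_of_real (m y) * complex_of_real (p y z)"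
        by (metis of_real_mult)
      then show "?K z y = (complex_of_real (m y) * h y) * (complex_of_real (p y z) * f z)"
        by (simp add: algebra_simps)
    qed
    also have "\<dots> = (complex_of_real (m y) * h y) * (\<Sum>\<^sub>\<infinity>z\<in>V. complex_of_real (p y z) * f z)"
      by (rule infsum_cmult_right')
    finally show "(\<Sum>\<^sub>\<infinity>z\<in>V. ?K z y) = complex_of_real (m y) * h y * transP S mu f y"
      using y by (simp add: transP_def)
  qed
  finally show ?thesis .
qed

end



lemma cancel1: "a \<in> fg_verts S \<Longrightarrow> z \<in> fg_verts S \<Longrightarrow> fg_mult (fg_inv a) (fg_mult a z) = z"
  by (metis fg_assoc fg_mult_Nil_left fg_mult_inv_left reduced_fg_inv verts_reduced)
lemma cancel2: "a \<in> fg_verts S \<Longrightarrow> z \<in> fg_verts S \<Longrightarrow> fg_mult a (fg_mult (fg_inv a) z) = z"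
  by (metis fg_assoc fg_mult_Nil_left fg_mult_inv_right reduced_fg_inv verts_reduced)

lemma tau_bij: "a \<in> fg_verts S \<Longrightarrow> bij_betw (fg_mult a) (fg_verts S) (fg_verts S)"
  apply (rule bij_betwI')
    apply (metis cancel1)
   apply (simp add: verts_mult)
  by (metis cancel2 verts_inv verts_mult)

lemma p_inv:
  assumes a: "a \<in> fg_verts S" and z: "z \<in> fg_verts S" and y: "y \<in> fg_verts S"
  shows "trans_p mu (fg_mult a z) (fg_mult a y) = trans_p mu z y"
proof -
  have ra: "reduced a" "reduced z" using a z verts_reduced by auto
  have az: "fg_mult a z \<in> fg_verts S" "fg_mult a y \<in> fg_verts S" using verts_mult a z y by auto
  show ?thesis
  proof (cases "\<exists>t\<in>letters S. y = step z t")
    case True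
    then obtain t where t: "t \<in> letters S" "y = step z t" by blast
    then have "fg_mult a y = step (fg_mult a z) t" using fg_mult_step ra by simp
    then show ?thesis using p_step[OF ra(2)] p_step[OF reduced_fg_mult[OF ra(1)]] t by simp
  next
    case False
    then have "trans_p mu z y = 0" using p_zero z y by blast
    moreover have "trans_p mu (fg_mult a z) (fg_mult a y) = 0"
    proof (rule p_zero[OF az], intro ballI notI)
      fix t assume t: "t \<in> letters S" and e: "fg_mult a y = step (fg_mult a z) t"
      then have "fg_mult a y = fg_mult a (step z t)" by (simp add: fg_mult_step[OF ra])
      then have "y = step z t" using cancel1[OF a y] cancel1[OF a verts_step[OF z t]] by metis
      then show False using False t by blast
    qed
    ultimately show ?thesis by simp
  qed
qed

locale fgr = fgw +
  fixes lam :: complex and R :: "('a word \<Rightarrow> complex) \<Rightarrow> 'a word \<Rightarrow> complex"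
  assumes bnd: "bounded_op_l2 S mu R"
    and rinv: "\<And>f. f \<in> l2m S mu \<Longrightarrow> shiftP S mu lam (R f) = f \<and> R (shiftP S mu lam f) = f"
begin

definition delta :: "'a word \<Rightarrow> 'a word \<Rightarrow> complex" where
  "delta y = (\<lambda>z. if z = y then 1 else 0)"

definition Gr where "Gr y = R (delta y)"

lemma R_l2m: "f \<in> l2m S mu \<Longrightarrow> R f \<in> l2m S mu" using bnd by (simp add: bounded_op_l2_def)
lemma delta_in: "y \<in> V \<Longrightarrow> delta y \<in> l2m S mu" unfolding delta_def by (rule delta_l2m)
lemma Gr_l2m: "y \<in> V \<Longrightarrow> Gr y \<in> l2m S mu" by (simp add: Gr_def R_l2m delta_in)
lemma Gr_shift: "y \<in> V \<Longrightarrow> shiftP S mu lam (Gr y) = delta y" by (simp add: Gr_def rinv delta_in)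
lemma uniq: "g \<in> l2m S mu \<Longrightarrow> f \<in> l2m S mu \<Longrightarrow> shiftP S mu lam g = f \<Longrightarrow> g = R f"
  using rinv by metis

lemma greenG_eq: "y \<in> V \<Longrightarrow> greenG S mu x y lam = Gr y x"
proof -
  assume y: "y \<in> V"
  let ?P = "\<lambda>g. g \<in> l2m S mu \<and> shiftP S mu lam g = (\<lambda>z. if z = y then 1 else 0)"
  have ex: "?P (Gr y)" using Gr_l2m[OF y] Gr_shift[OF y] by (simp add: delta_def)
  then have "?P (SOME g. ?P g)" using someI[of ?P] by blast
  then have "(SOME g. ?P g) = Gr y"
    using uniq[of "SOME g. ?P g" "delta y"] delta_in[OF y] by (simp add: Gr_def delta_def)
  then show ?thesis by (simp add: greenG_def)
qed

lemma transP_Gr: "y \<in> V \<Longrightarrow> transP S mu (Gr y) z = lam * Gr y z - delta y z"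
proof -
  assume y: "y \<in> V"
  have E: "lam * Gr y z - transP S mu (Gr y) z = delta y z"
    using fun_cong[OF Gr_shift[OF y], of z] by (simp add: shiftP_def)
  show ?thesis by (simp add: E[symmetric])
qed

lemma eval_sum:
  assumes f: "f \<in> l2m S mu" and y: "y \<in> V"
  shows "(\<Sum>\<^sub>\<infinity>z\<in>V. complex_of_real (m z) * f z * transP S mu (Gr y) z)
       = lam * (\<Sum>\<^sub>\<infinity>z\<in>V. complex_of_real (m z) * f z * Gr y z) - complex_of_real (m y) * f y"
proof -
  let ?A = "\<lambda>z. complex_of_real (m z) * f z * Gr y z"
  let ?D = "\<lambda>z. complex_of_real (m z) * f z * delta y z"
  have sA: "?A summable_on V" by (rule diag_summable[OF f Gr_l2m[OF y]])
  have h1: "((\<lambda>z. lam * ?A z) has_sum lam * infsum ?A V) V"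
    by (rule has_sum_cmult_right[OF has_sum_infsum[OF sA]])
  have "(?D has_sum (sum ?D {y})) {y}" by (rule has_sum_finite) simp
  then have "(?D has_sum (complex_of_real (m y) * f y)) {y}" by (simp add: delta_def)
  then have h2: "(?D has_sum (complex_of_real (m y) * f y)) V"
    using y by (subst has_sum_cong_neutral[where T="{y}" and g="?D"]) (auto simp: delta_def)
  have "((\<lambda>z. lam * ?A z + - ?D z) has_sum (lam * infsum ?A V + - (complex_of_real (m y) * f y))) V"
    by (rule has_sum_add[OF h1 has_sum_uminusI[OF h2]])
  then have "((\<lambda>z. complex_of_real (m z) * f z * transP S mu (Gr y) z) has_sum
      (lam * infsum ?A V - complex_of_real (m y) * f y)) V"
    by (subst has_sum_cong[where g="\<lambda>z. lam * ?A z + - ?D z"])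
       (auto simp: transP_Gr[OF y] algebra_simps)
  then show ?thesis by (simp add: infsumI)
qed

lemma Gr_sym:
  assumes x: "x \<in> V" and y: "y \<in> V"
  shows "complex_of_real (m y) * Gr x y = complex_of_real (m x) * Gr y x"
proof -
  have e: "(\<Sum>\<^sub>\<infinity>z\<in>V. complex_of_real (m z) * Gr x z * transP S mu (Gr y) z)
        = (\<Sum>\<^sub>\<infinity>z\<in>V. complex_of_real (m z) * Gr y z * transP S mu (Gr x) z)"
    by (rule symmetry[OF Gr_l2m[OF x] Gr_l2m[OF y]])
  have c: "(\<Sum>\<^sub>\<infinity>z\<in>V. complex_of_real (m z) * Gr y z * Gr x z) = (\<Sum>\<^sub>\<infinity>z\<in>V. complex_of_real (m z) * Gr x z * Gr y z)"
    by (simp add: mult.commute mult.left_commute)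
  show ?thesis
    using e eval_sum[OF Gr_l2m[OF x] y] eval_sum[OF Gr_l2m[OF y] x] c by simp
qed

end



context fgr begin

definition TT :: "'a word \<Rightarrow> ('a word \<Rightarrow> complex) \<Rightarrow> 'a word \<Rightarrow> complex" where
  "TT a f = (\<lambda>z. if z \<in> V then f (fg_mult a z) else 0)"

lemma T_l2m:
  assumes a: "a \<in> V" and f: "f \<in> l2m S mu"
  shows "TT a f \<in> l2m S mu"
proof -
  have s: "(\<lambda>w. m w * (cmod (f w))\<^sup>2) summable_on V" by (rule l2m_sum[OF f])
  then have "(\<lambda>z. m (fg_mult a z) * (cmod (f (fg_mult a z)))\<^sup>2) summable_on V"
    using summable_on_reindex_bij_betw[OF tau_bij[OF a], of "\<lambda>w. m w * (cmod (f w))\<^sup>2"] by simp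
  then have "(\<lambda>z. (1 / m a) * (m (fg_mult a z) * (cmod (f (fg_mult a z)))\<^sup>2)) summable_on V"
    by (rule summable_on_cmult_right)
  then have "(\<lambda>z. m z * (cmod (TT a f z))\<^sup>2) summable_on V"
  proof (rule summable_on_cong[THEN iffD1, rotated])
    fix z assume z: "z \<in> V"
    have "m (fg_mult a z) = m a * m z" by (rule rev_meas_mult[OF mpos a z])
    then show "(1 / m a) * (m (fg_mult a z) * (cmod (f (fg_mult a z)))\<^sup>2) = m z * (cmod (TT a f z))\<^sup>2"
      using m_pos[OF a] z by (simp add: TT_def)
  qed
  then show ?thesis by (simp add: l2m_def TT_def)
qed

lemma T_transP:
  assumes a: "a \<in> V" and z: "z \<in> V"
  shows "transP S mu (TT a f) z = transP S mu f (fg_mult a z)"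
proof -
  have "transP S mu (TT a f) z = (\<Sum>\<^sub>\<infinity>y\<in>V. complex_of_real (p z y) * TT a f y)"
    using z by (simp add: transP_def)
  also have "\<dots> = (\<Sum>\<^sub>\<infinity>y\<in>V. complex_of_real (p (fg_mult a z) (fg_mult a y)) * f (fg_mult a y))"
    by (rule infsum_cong) (simp add: TT_def p_inv[OF a z])
  also have "\<dots> = (\<Sum>\<^sub>\<infinity>w\<in>V. complex_of_real (p (fg_mult a z) w) * f w)"
    by (rule infsum_reindex_bij_betw[OF tau_bij[OF a], of "\<lambda>w. complex_of_real (p (fg_mult a z) w) * f w"])
  also have "\<dots> = transP S mu f (fg_mult a z)"
    using verts_mult[OF a z] by (simp add: transP_def)
  finally show ?thesis .
qed

lemma Gr_trans:
  assumes a: "a \<in> V" and y: "y \<in> V" and z: "z \<in> V"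
  shows "Gr (fg_mult (fg_inv a) y) z = Gr y (fg_mult a z)"
proof -
  let ?y' = "fg_mult (fg_inv a) y"
  have y': "?y' \<in> V" using verts_mult[OF verts_inv[OF a] y] .
  have l: "TT a (Gr y) \<in> l2m S mu" by (rule T_l2m[OF a Gr_l2m[OF y]])
  have sh: "shiftP S mu lam (TT a (Gr y)) = delta ?y'"
  proof
    fix w
    show "shiftP S mu lam (TT a (Gr y)) w = delta ?y' w"
    proof (cases "w \<in> V")
      case True
      have "shiftP S mu lam (TT a (Gr y)) w = shiftP S mu lam (Gr y) (fg_mult a w)"
        using True by (simp add: shiftP_def T_transP[OF a True]) (simp add: TT_def)
      also have "\<dots> = delta y (fg_mult a w)" by (simp add: Gr_shift[OF y])
      also have "\<dots> = delta ?y' w"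
        unfolding delta_def using cancel1[OF a True] cancel2[OF a y] by metis
      finally show ?thesis .
    next
      case False
      then show ?thesis using y' by (auto simp: shiftP_def transP_def TT_def delta_def)
    qed
  qed
  have "TT a (Gr y) = Gr ?y'"
    using uniq[OF l delta_in[OF y'] sh] by (simp add: Gr_def)
  then show ?thesis using z by (metis TT_def)
qed

lemma hd_step:
  assumes "z \<noteq> []" "step z s \<noteq> []" shows "hd (step z s) = hd z"
proof -
  obtain x xs where z: "z = x # xs" using assms(1) by (cases z) auto
  show ?thesis
  proof (cases "last z = flip s")
    case True
    then have "step z s = butlast z" using assms(1) by (simp add: step_def)
    then show ?thesis using assms(2) z by (cases xs) auto
  next
    case False
    then have "step z s = z @ [s]" by (simp add: step_def)
    then show ?thesis using z by simp
  qed
qed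

lemma branch:
  assumes g0: "Gr [] [] = 0"
  shows "\<exists>t\<in>letters S. Gr [] [t] \<noteq> 0 \<and> Gr [] [flip t] = 0"
proof -
  let ?g = "Gr []"
  have gl: "?g \<in> l2m S mu" using Gr_l2m by simp
  have "transP S mu ?g [] = lam * ?g [] - delta [] []" by (rule transP_Gr) simp
  then have tp: "transP S mu ?g [] = -1" using g0 by (simp add: delta_def)
  have "\<exists>y\<in>V. complex_of_real (p [] y) * ?g y \<noteq> 0"
  proof (rule ccontr)
    assume "\<not> ?thesis"
    then have "(\<Sum>\<^sub>\<infinity>y\<in>V. complex_of_real (p [] y) * ?g y) = 0" by (intro infsum_0) auto
    then show False using tp by (simp add: transP_def)
  qed
  then obtain y where y: "y \<in> V" and ne: "complex_of_real (p [] y) * ?g y \<noteq> 0" by blast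
  then have "p [] y \<noteq> 0" by auto
  then obtain t where t: "t \<in> letters S" and yt: "y = step [] t" and pt: "p [] y = mu t"
    using p_cases[of "[]" S y mu] y by auto
  have yt': "y = [t]" using yt by (simp add: step_def)
  have gt: "?g [t] \<noteq> 0" using ne yt' by simp
  define B where "B = {z. z \<noteq> [] \<and> hd z = t}"
  define gB where "gB = (\<lambda>z. if z \<in> B then ?g z else 0)"
  define c where "c = - complex_of_real (mu t) * ?g [t]"
  have c0: "c \<noteq> 0" using gt mpos[OF t] by (simp add: c_def)
  have gBl: "gB \<in> l2m S mu" unfolding gB_def by (rule restrict_l2m[OF gl])
  have cgl: "(\<lambda>z. c * ?g z) \<in> l2m S mu" by (rule scale_l2m[OF gl])
  have shc: "shiftP S mu lam (\<lambda>z. c * ?g z) = (\<lambda>z. c * delta [] z)"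
    by (simp add: shiftP_scale Gr_shift)
  have shB: "shiftP S mu lam gB = (\<lambda>z. c * delta [] z)"
  proof
    fix z
    show "shiftP S mu lam gB z = c * delta [] z"
    proof (cases "z \<in> V")
      case False
      then have "z \<noteq> []" by auto
      moreover have "gB z = 0" using l2m_zero[OF gl False] by (simp add: gB_def)
      ultimately show ?thesis using False by (simp add: shiftP_def transP_def delta_def)
    next
      case zV: True
      show ?thesis
      proof (cases "z = []")
        case True
        have "(\<Sum>\<^sub>\<infinity>y\<in>V. complex_of_real (p [] y) * gB y) = (\<Sum>\<^sub>\<infinity>y\<in>{[t]}. complex_of_real (p [] y) * gB y)"
        proof (rule infsum_cong_neutral)
          fix w assume w: "w \<in> V - {[t]}"
          show "complex_of_real (p [] w) * gB w = 0"
          proof (cases "\<exists>s\<in>letters S. w = step [] s")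
            case True
            then obtain s where "w = [s]" by (auto simp: step_def)
            then have "w \<notin> B" using w by (auto simp: B_def)
            then show ?thesis by (simp add: gB_def)
          next
            case False
            then show ?thesis using p_zero[of "[]" S w mu] w by auto
          qed
        qed (use verts_single[OF t] in auto)
        also have "\<dots> = complex_of_real (mu t) * ?g [t]"
          using pt yt' by (simp add: gB_def B_def)
        finally have "transP S mu gB [] = complex_of_real (mu t) * ?g [t]"
          by (simp add: transP_def)
        moreover have "gB [] = 0" by (simp add: gB_def B_def)
        ultimately show ?thesis using True by (simp add: shiftP_def delta_def c_def)
      next
        case zne: False
        show ?thesis
        proof (cases "z \<in> B")
          case True
          have "transP S mu gB z = transP S mu ?g z"
            unfolding transP_def using zV
          proof (simp, intro infsum_cong)
            fix w assume w: "w \<in> V"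
            show "complex_of_real (p z w) * gB w = complex_of_real (p z w) * ?g w"
            proof (cases "\<exists>s\<in>letters S. w = step z s")
              case True
              then obtain s where "w = step z s" by blast
              moreover have "step z s \<noteq> [] \<Longrightarrow> hd (step z s) = hd z" by (rule hd_step[OF zne])
              ultimately have "w \<in> B \<or> w = []" using \<open>z \<in> B\<close>
                by (auto simp: B_def)
              then show ?thesis using g0 by (auto simp: gB_def)
            next
              case False
              then show ?thesis using p_zero[OF zV w, of mu] by simp
            qed
          qed
          moreover have "gB z = ?g z" using True by (simp add: gB_def)
          ultimately have "shiftP S mu lam gB z = shiftP S mu lam ?g z" by (simp add: shiftP_def)
          then show ?thesis using zne by (simp add: Gr_shift delta_def)
        next
          case False
          have "transP S mu gB z = 0"
            unfolding transP_def using zV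
          proof (simp, intro infsum_0)
            fix w assume w: "w \<in> V"
            show "complex_of_real (p z w) * gB w = 0"
            proof (cases "\<exists>s\<in>letters S. w = step z s")
              case True
              then obtain s where "w = step z s" by blast
              moreover have "step z s \<noteq> [] \<Longrightarrow> hd (step z s) = hd z" by (rule hd_step[OF zne])
              ultimately have "w \<notin> B" using False zne by (auto simp: B_def)
              then show ?thesis by (simp add: gB_def)
            next
              case False
              then show ?thesis using p_zero[OF zV w, of mu] by simp
            qed
          qed
          moreover have "gB z = 0" using False by (simp add: gB_def)
          ultimately show ?thesis using zne by (simp add: shiftP_def delta_def)
        qed
      qed
    qed
  qed
  have "gB = R (\<lambda>z. c * delta [] z)"
    by (rule uniq[OF gBl _ shB]) (rule scale_l2m[OF delta_in], simp)
  moreover have "(\<lambda>z. c * ?g z) = R (\<lambda>z. c * delta [] z)"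
    by (rule uniq[OF cgl _ shc]) (rule scale_l2m[OF delta_in], simp)
  ultimately have "gB = (\<lambda>z. c * ?g z)" by simp
  then have "gB [flip t] = c * ?g [flip t]" by (rule fun_cong)
  moreover have "[flip t] \<notin> B" by (simp add: B_def)
  ultimately have "?g [flip t] = 0" using c0 by (simp add: gB_def)
  then show ?thesis using t gt by blast
qed

lemma main:
  assumes x: "x \<in> V" shows "Gr x x \<noteq> 0"
proof
  assume h: "Gr x x = 0"
  have "Gr (fg_mult (fg_inv x) x) [] = Gr x (fg_mult x [])" by (rule Gr_trans[OF x x]) simp
  then have g0: "Gr [] [] = 0" using h fg_mult_inv_left[OF verts_reduced[OF x]] by simp
  obtain t where t: "t \<in> letters S" and g1: "Gr [] [t] \<noteq> 0" and g2: "Gr [] [flip t] = 0"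
    using branch[OF g0] by blast
  have ft: "[flip t] \<in> V" using verts_single flip_letters[OF t] by blast
  have "Gr (fg_mult (fg_inv [flip t]) []) [] = Gr [] (fg_mult [flip t] [])"
    by (rule Gr_trans[OF ft]) simp_all
  then have g3: "Gr [t] [] = 0" using g2 by (simp add: fg_inv_def)
  have "complex_of_real (m [t]) * Gr [] [t] = complex_of_real (m []) * Gr [t] []"
    by (rule Gr_sym) (simp_all add: verts_single[OF t])
  then have "complex_of_real (m [t]) * Gr [] [t] = 0" using g3 by simp
  moreover have "m [t] > 0" using m_pos verts_single[OF t] by blast
  ultimately show False using g1 by simp
qed

end

theorem corollary4p1:
  fixes S :: "'a set" and mu :: "'a letter \<Rightarrow> real"
  assumes "countable S"
    and "\<And>t. t \<in> letters S \<Longrightarrow> mu t > 0"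
    and "(mu has_sum 1) (letters S)"
  shows "(\<forall>lam\<in>resP S mu. \<forall>x\<in>fg_verts S. greenG S mu x x lam \<noteq> 0)
         \<and> resP_star S mu = resP S mu"
proof -
  have A: "\<forall>lam\<in>resP S mu. \<forall>x\<in>fg_verts S. greenG S mu x x lam \<noteq> 0"
  proof (intro ballI)
    fix lam x assume lam: "lam \<in> resP S mu" and x: "x \<in> fg_verts S"
    obtain R where bnd: "bounded_op_l2 S mu R"
      and inv: "\<forall>f\<in>l2m S mu. shiftP S mu lam (R f) = f \<and> R (shiftP S mu lam f) = f"
      using lam by (auto simp: resP_def)
    interpret fgr S mu lam R
      by unfold_locales (use assms(2,3) bnd inv in auto)
    show "greenG S mu x x lam \<noteq> 0" using greenG_eq[OF x] main[OF x] by simp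
  qed
  moreover have "resP_star S mu = resP S mu" using A by (auto simp: resP_star_def)
  ultimately show ?thesis by blast
qed

end
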